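(* Assume the common support, overlap and unconfoundedness assumptions. Then for all $x\in\mathcal X$, $\theta_{\mathrm{AR}}(x)=r(x,p_0)\,\Gamma_{\mathrm{AR}}(x,p)$, where $p=p_0$ under Design 1 and $p=0$ under Design 2.
   Context: Population variables: $Y^*\in\{0,1\}$ (outcome), $T^*\in\{0,1\}$ (treatment), $X^*$ (covariate vector). Potential outcomes $Y^*(1),Y^*(0)\in\{0,1\}$ satisfy $Y^*=T^*Y^*(1)+(1-T^* )Y^*(0)$. Let $p_0:=\Pr(Y^*=1)$. The observed vector $(Y,T,X)$ arises from Bernoulli sampling: $Y\in\{0,1\}$ is drawn with known probability $h_0:=\Pr(Y=1)\in(0,1)$, and given $Y=y$, $(T,X)$ is drawn from a distribution $\mathcal P_y$. Densities (or mass functions) are denoted by $f$. Design 1 (case-control): for all $t\in\{0,1\}$, $x\in\mathcal X$, $y\in\{0,1\}$, $f_{X|Y}(x\mid y)=f_{X^*|Y^*}(x\mid y)$ and $\Pr(T=t\mid X=x,Y=y)=\Pr(T^*=t\mid X^*=x,Y^*=y)$. Design 2 (case-population): for all $t,x$, $f_{X|Y}(x\mid 0)=f_{X^*}(x)$, $\Pr(T=t\mid X=x,Y=0)=\Pr(T^*=t\mid X^*=x)$, $f_{X|Y}(x\mid 1)=f_{X^*|Y^*}(x\mid 1)$, $\Pr(T=t\mid X=x,Y=1)=\Pr(T^*=t\mid X^*=x,Y^*=1)$. Common support assumption: the support of $X^*$ and that of $X$ given $Y=y$ for $y=0,1$ coincide; call it $\mathcal X$. Let $\Pi(t\mid y,x):=\Pr(T=t\mid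 Y=y,X=x)$, assumed nonzero for all $t,y$. For $p\in[0,1]$, under Design 1, $r(x,p):=\frac{p(1-h_0)\Pr(Y=1\mid X=x)}{p(1-h_0)\Pr(Y=1\mid X=x)+h_0(1-p)\Pr(Y=0\mid X=x)}$, and under Design 2, $r(x,p):=\frac{p(1-h_0)}{h_0}\frac{\Pr(Y=1\mid X=x)}{\Pr(Y=0\mid X=x)}$. Define $\Gamma_{\mathrm{AR}}(x,p):=\frac{\Pi(1\mid 1,x)}{\Pi(1\mid 0,x)+r(x,p)\{\Pi(1\mid 1,x)-\Pi(1\mid 0,x)\}}-\frac{\Pi(0\mid 1,x)}{\Pi(0\mid 0,x)+r(x,p)\{\Pi(0\mid 1,x)-\Pi(0\mid 0,x)\}}$. Causal attributable risk: $\theta_{\mathrm{AR}}(x):=\Pr\{Y^*(1)=1\mid X^*=x\}-\Pr\{Y^*(0)=1\mid X^*=x\}$. Overlap: for all $(t,x)\in\{0,1\}\times\mathcal X$, $0<\Pr\{Y^*(t)=1\mid X^*=x\}<1$ and $0<\Pr(T^*=1\mid X^*=x)<1$. Unconfoundedness: for all $t,x$, $\Pr\{Y^*(t)=1\mid T^*=1,X^*=x\}=\Pr\{Y^*(t)=1\mid T^*=0,X^*=x\}$. *)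

theory Defs
  imports "HOL-Probability.Probability"
begin

text \<open>
Population: a dominating measure M on the covariate space, a density fXs of X*
w.r.t. M, and for every x a pmf K x of the triple (Y*(1), Y*(0), T*) given X* = x.
Observed sample: h0 = Pr(Y=1), conditional densities fXY y of X given Y = y w.r.t. M,
and for every (y,x) a pmf PT y x of T given Y = y, X = x.
\<close>

datatype design = CaseControl | CasePopulation

type_synonym pop = "bool \<times> bool \<times> bool"  (* (Y*(1), Y*(0), T* ) *)

definition Ystar :: "pop \<Rightarrow> bool" where
  "Ystar w = (if snd (snd w) then fst w else fst (snd w))"

definition Tstar :: "pop \<Rightarrow> bool" where
  "Tstar w = snd (snd w)"

definition Ypot :: "bool \<Rightarrow> pop \<Rightarrow> bool" where
  "Ypot t w = (if t then fst w else fst (snd w))"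

definition cprob :: "('x \<Rightarrow> pop pmf) \<Rightarrow> 'x \<Rightarrow> (pop \<Rightarrow> bool) \<Rightarrow> real" where
  "cprob K x P = measure_pmf.prob (K x) {w. P w}"

definition popY1 :: "('x \<Rightarrow> pop pmf) \<Rightarrow> 'x \<Rightarrow> real" where
  "popY1 K x = cprob K x Ystar"

definition popT :: "('x \<Rightarrow> pop pmf) \<Rightarrow> 'x \<Rightarrow> bool \<Rightarrow> real" where
  "popT K x t = cprob K x (\<lambda>w. Tstar w = t)"

definition popT_Y :: "('x \<Rightarrow> pop pmf) \<Rightarrow> 'x \<Rightarrow> bool \<Rightarrow> bool \<Rightarrow> real" where
  "popT_Y K x t y = cprob K x (\<lambda>w. Tstar w = t \<and> Ystar w = y) / cprob K x (\<lambda>w. Ystar w = y)"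

definition popYpot :: "('x \<Rightarrow> pop pmf) \<Rightarrow> 'x \<Rightarrow> bool \<Rightarrow> real" where
  "popYpot K x t = cprob K x (Ypot t)"

definition popYpot_T :: "('x \<Rightarrow> pop pmf) \<Rightarrow> 'x \<Rightarrow> bool \<Rightarrow> bool \<Rightarrow> real" where
  "popYpot_T K x s t = cprob K x (\<lambda>w. Ypot s w \<and> Tstar w = t) / cprob K x (\<lambda>w. Tstar w = t)"

definition p0 :: "'x measure \<Rightarrow> ('x \<Rightarrow> real) \<Rightarrow> ('x \<Rightarrow> pop pmf) \<Rightarrow> real" where
  "p0 M fXs K = (\<integral>x. fXs x * popY1 K x \<partial>M)"

text \<open>f_{X*|Y*}(x | y) (Bayes' rule)\<close>
definition fXsY :: "'x measure \<Rightarrow> ('x \<Rightarrow> real) \<Rightarrow> ('x \<Rightarrow> pop pmf) \<Rightarrow> bool \<Rightarrow> 'x \<Rightarrow> real" where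
  "fXsY M fXs K y x =
     (if y then fXs x * popY1 K x / p0 M fXs K
      else fXs x * (1 - popY1 K x) / (1 - p0 M fXs K))"

definition thetaAR :: "('x \<Rightarrow> pop pmf) \<Rightarrow> 'x \<Rightarrow> real" where
  "thetaAR K x = popYpot K x True - popYpot K x False"

definition supp :: "('x \<Rightarrow> real) \<Rightarrow> 'x set" where
  "supp f = {x. 0 < f x}"

text \<open>Observed: Pr(Y = y | X = x) via Bayes' rule\<close>
definition obsY :: "real \<Rightarrow> (bool \<Rightarrow> 'x \<Rightarrow> real) \<Rightarrow> bool \<Rightarrow> 'x \<Rightarrow> real" where
  "obsY h0 fXY y x =
     (if y then h0 * fXY True x else (1 - h0) * fXY False x)
     / (h0 * fXY True x + (1 - h0) * fXY False x)"

definition Pi :: "(bool \<Rightarrow> 'x \<Rightarrow> bool pmf) \<Rightarrow> bool \<Rightarrow> bool \<Rightarrow> 'x \<Rightarrow> real" where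
  "Pi PT t y x = pmf (PT y x) t"

definition r_AR :: "design \<Rightarrow> real \<Rightarrow> (bool \<Rightarrow> 'x \<Rightarrow> real) \<Rightarrow> 'x \<Rightarrow> real \<Rightarrow> real" where
  "r_AR d h0 fXY x p = (case d of
     CaseControl \<Rightarrow>
       p * (1 - h0) * obsY h0 fXY True x /
       (p * (1 - h0) * obsY h0 fXY True x + h0 * (1 - p) * obsY h0 fXY False x)
   | CasePopulation \<Rightarrow>
       p * (1 - h0) / h0 * (obsY h0 fXY True x / obsY h0 fXY False x))"

definition Gamma_AR :: "design \<Rightarrow> real \<Rightarrow> (bool \<Rightarrow> 'x \<Rightarrow> real) \<Rightarrow> (bool \<Rightarrow> 'x \<Rightarrow> bool pmf)
    \<Rightarrow> 'x \<Rightarrow> real \<Rightarrow> real" where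
  "Gamma_AR d h0 fXY PT x p =
     (let r = r_AR d h0 fXY x p in
        Pi PT True True x / (Pi PT True False x + r * (Pi PT True True x - Pi PT True False x))
      - Pi PT False True x / (Pi PT False False x + r * (Pi PT False True x - Pi PT False False x)))"

definition design_holds :: "design \<Rightarrow> 'x measure \<Rightarrow> ('x \<Rightarrow> real) \<Rightarrow> ('x \<Rightarrow> pop pmf)
    \<Rightarrow> (bool \<Rightarrow> 'x \<Rightarrow> real) \<Rightarrow> (bool \<Rightarrow> 'x \<Rightarrow> bool pmf) \<Rightarrow> bool" where
  "design_holds d M fXs K fXY PT = (case d of
     CaseControl \<Rightarrow>
       (\<forall>x\<in>supp fXs. \<forall>y t. fXY y x = fXsY M fXs K y x \<and> Pi PT t y x = popT_Y K x t y)
   | CasePopulation \<Rightarrow>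
       (\<forall>x\<in>supp fXs. \<forall>t.
          fXY False x = fXs x \<and> Pi PT t False x = popT K x t \<and>
          fXY True x = fXsY M fXs K True x \<and> Pi PT t True x = popT_Y K x t True))"

end

theory Submission
  imports Defs
begin

lemma UNIV_pop: "(UNIV :: pop set) = {(True,True,True),(True,True,False),(True,False,True),(True,False,False),
   (False,True,True),(False,True,False),(False,False,True),(False,False,False)}"
  by auto

lemma cprob_expand: "cprob K x P = (\<Sum>w\<in>UNIV. if P w then pmf (K x) w else 0)"
proof -
  have "cprob K x P = (\<Sum>w\<in>{w\<in>UNIV. P w}. pmf (K x) w)"
    by (simp add: cprob_def measure_measure_pmf_finite)
  also have "\<dots> = (\<Sum>w\<in>UNIV. if P w then pmf (K x) w else 0)"
    by (rule sum.inter_filter) simp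
  finally show ?thesis .
qed

lemma cprob8: "cprob K x P =
   (if P (True,True,True) then pmf (K x) (True,True,True) else 0) +
   (if P (True,True,False) then pmf (K x) (True,True,False) else 0) +
   (if P (True,False,True) then pmf (K x) (True,False,True) else 0) +
   (if P (True,False,False) then pmf (K x) (True,False,False) else 0) +
   (if P (False,True,True) then pmf (K x) (False,True,True) else 0) +
   (if P (False,True,False) then pmf (K x) (False,True,False) else 0) +
   (if P (False,False,True) then pmf (K x) (False,False,True) else 0) +
   (if P (False,False,False) then pmf (K x) (False,False,False) else 0)"
  by (simp add: cprob_expand UNIV_pop algebra_simps)

lemma cprob_true: "cprob K x (\<lambda>_. True) = 1"
  by (simp add: cprob_def)

lemma Gamma_core:
  fixes pi A11 A10 B1 B0 m :: real
  assumes pi: "0 < pi" "pi < 1"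
    and m: "0 < m" "m < 1"
    and u1: "A11 = (A11 + A10) * pi" and u0: "B0 = (B1 + B0) * (1 - pi)"
  shows "m * (A11 / m / (((pi - A11) / (1 - m)) + m * (A11 / m - (pi - A11) / (1 - m)))
        - B0 / m / (((1 - pi - B0) / (1 - m)) + m * (B0 / m - (1 - pi - B0) / (1 - m))))
       = (A11 + A10) - (B1 + B0)"
proof -
  have mm: "m * (X / m) = X" for X using m by simp
  have gen: "Q + m * (R - Q) = (1 - m) * Q + m * R" for Q R by (simp add: algebra_simps)
  have mm1: "(1 - m) * (X / (1 - m)) = X" for X using m by simp
  have d1: "((pi - A11) / (1 - m)) + m * (A11 / m - (pi - A11) / (1 - m)) = pi"
  proof -
    have "((pi - A11) / (1 - m)) + m * (A11 / m - (pi - A11) / (1 - m))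
        = (1 - m) * ((pi - A11) / (1 - m)) + m * (A11 / m)" by (rule gen)
    also have "\<dots> = pi" by (simp only: mm mm1; simp)
    finally show ?thesis .
  qed
  have d0: "((1 - pi - B0) / (1 - m)) + m * (B0 / m - (1 - pi - B0) / (1 - m)) = 1 - pi"
  proof -
    have "((1 - pi - B0) / (1 - m)) + m * (B0 / m - (1 - pi - B0) / (1 - m))
        = (1 - m) * ((1 - pi - B0) / (1 - m)) + m * (B0 / m)" by (rule gen)
    also have "\<dots> = 1 - pi" by (simp only: mm mm1; simp)
    finally show ?thesis .
  qed
  have "m * (A11 / m / pi - B0 / m / (1 - pi)) = A11 / pi - B0 / (1 - pi)"
    using m pi by (simp add: field_simps)
  also have "\<dots> = (A11 + A10) - (B1 + B0)"
  proof -
    have "A11 / pi = A11 + A10" using pi u1 by (simp add: field_simps)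
    moreover have "B0 / (1 - pi) = B1 + B0" using pi u0 by (simp add: field_simps)
    ultimately show ?thesis by simp
  qed
  finally show ?thesis by (simp add: d1 d0)
qed

lemma Gamma_core2:
  fixes pi A11 A10 B1 B0 m :: real
  assumes pi: "0 < pi" "pi < 1"
    and m: "0 < m"
    and u1: "A11 = (A11 + A10) * pi" and u0: "B0 = (B1 + B0) * (1 - pi)"
  shows "m * (A11 / m / pi - B0 / m / (1 - pi)) = (A11 + A10) - (B1 + B0)"
proof -
  have "m * (A11 / m / pi - B0 / m / (1 - pi)) = A11 / pi - B0 / (1 - pi)"
    using m pi by (simp add: field_simps)
  also have "\<dots> = (A11 + A10) - (B1 + B0)"
  proof -
    have "A11 / pi = A11 + A10" using pi u1 by (simp add: field_simps)
    moreover have "B0 / (1 - pi) = B1 + B0" using pi u0 by (simp add: field_simps)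
    ultimately show ?thesis by simp
  qed
  finally show ?thesis .
qed

theorem theorem5:
  fixes d :: design and M :: "'x measure" and fXs :: "'x \<Rightarrow> real"
    and K :: "'x \<Rightarrow> pop pmf" and h0 :: real
    and fXY :: "bool \<Rightarrow> 'x \<Rightarrow> real" and PT :: "bool \<Rightarrow> 'x \<Rightarrow> bool pmf"
  assumes dens_pop: "\<forall>x. 0 \<le> fXs x" "integrable M fXs" "(\<integral>x. fXs x \<partial>M) = 1"
    and meas_K: "(\<lambda>x. popY1 K x) \<in> borel_measurable M"
    and dens_obs: "\<forall>y x. 0 \<le> fXY y x" "\<forall>y. integrable M (fXY y)"
      "\<forall>y. (\<integral>x. fXY y x \<partial>M) = 1"
    and h0: "0 < h0" "h0 < 1"
    and design: "design_holds d M fXs K fXY PT"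
    and common_support: "\<forall>y. supp (fXY y) = supp fXs"
    and Pi_nonzero: "\<forall>x\<in>supp fXs. \<forall>t y. Pi PT t y x \<noteq> 0"
    and overlap: "\<forall>x\<in>supp fXs. \<forall>t. 0 < popYpot K x t \<and> popYpot K x t < 1"
                 "\<forall>x\<in>supp fXs. 0 < popT K x True \<and> popT K x True < 1"
    and unconf: "\<forall>x\<in>supp fXs. \<forall>t. popYpot_T K x t True = popYpot_T K x t False"
  shows "\<forall>x\<in>supp fXs. thetaAR K x =
           r_AR d h0 fXY x (p0 M fXs K) *
           Gamma_AR d h0 fXY PT x
             (case d of CaseControl \<Rightarrow> p0 M fXs K | CasePopulation \<Rightarrow> 0)"
proof
  fix x assume x: "x \<in> supp fXs"
  define e where "e a b c = pmf (K x) (a,b,c)" for a b c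
  have tot: "e True True True + e True True False + e True False True + e True False False +
      e False True True + e False True False + e False False True + e False False False = 1"
    using cprob_true[of K x] unfolding cprob8 e_def by simp
  define pi where "pi = e False False True + e False True True + e True False True + e True True True"
  define A11 where "A11 = e True False True + e True True True"
  define A10 where "A10 = e True False False + e True True False"
  define B1 where "B1 = e False True True + e True True True"
  define B0 where "B0 = e False True False + e True True False"
  define m where "m = A11 + B0"
  have popT1: "popT K x True = pi" unfolding popT_def cprob8 pi_def e_def Tstar_def by (simp add: add_ac)
  have q1: "popYpot K x True = A11 + A10" unfolding popYpot_def cprob8 A11_def A10_def e_def Ypot_def by (simp add: add_ac)
  have q0: "popYpot K x False = B1 + B0" unfolding popYpot_def cprob8 B1_def B0_def e_def Ypot_def by (simp add: add_ac)
  have YT11: "popYpot_T K x True True = A11 / pi"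
    unfolding popYpot_T_def cprob8 A11_def pi_def e_def Ypot_def Tstar_def by (simp add: add_ac)
  have cpi: "1 - pi = e False False False + e False True False + e True False False + e True True False"
    using tot unfolding pi_def by simp
  have cm: "1 - m = e False False False + e True False False + e False False True + e False True True"
    using tot unfolding m_def A11_def B0_def by simp
  have cpb: "1 - pi - B0 = e False False False + e True False False"
    using cpi unfolding B0_def by simp
  have cpa: "pi - A11 = e False False True + e False True True"
    unfolding pi_def A11_def by simp
  have YT10: "popYpot_T K x True False = A10 / (1 - pi)"
    unfolding cpi popYpot_T_def cprob8 A10_def e_def Ypot_def Tstar_def
    by (simp add: add_ac)
  have YT01: "popYpot_T K x False True = B1 / pi"
    unfolding popYpot_T_def cprob8 B1_def pi_def e_def Ypot_def Tstar_def by (simp add: add_ac)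
  have YT00: "popYpot_T K x False False = B0 / (1 - pi)"
    unfolding cpi popYpot_T_def cprob8 B0_def e_def Ypot_def Tstar_def
    by (simp add: add_ac)
  have Y1: "popY1 K x = m"
    unfolding popY1_def cprob8 m_def A11_def B0_def e_def Ystar_def by (simp add: add_ac)
  have TY11: "popT_Y K x True True = A11 / m"
    unfolding popT_Y_def cprob8 m_def A11_def B0_def e_def Ystar_def Tstar_def by (simp add: add_ac)
  have TY10: "popT_Y K x True False = (pi - A11) / (1 - m)"
    unfolding cpa cm popT_Y_def cprob8 e_def Ystar_def Tstar_def
    by (simp add: add_ac)
  have TY01: "popT_Y K x False True = B0 / m"
    unfolding popT_Y_def cprob8 m_def A11_def B0_def e_def Ystar_def Tstar_def by (simp add: add_ac)
  have TY00: "popT_Y K x False False = (1 - pi - B0) / (1 - m)"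
    unfolding cpb cm popT_Y_def cprob8 e_def Ystar_def Tstar_def
    by (simp add: add_ac)
  have popT0: "popT K x False = 1 - pi"
    unfolding cpi popT_def cprob8 e_def Tstar_def by (simp add: add_ac)
  have pi: "0 < pi" "pi < 1" using overlap(2) x popT1 by auto
  have q1b: "0 < A11 + A10" "A11 + A10 < 1" using overlap(1) x q1 by (metis)+
  have q0b: "0 < B1 + B0" "B1 + B0 < 1" using overlap(1) x q0 by (metis)+
  have u1: "A11 = (A11 + A10) * pi"
  proof -
    have "A11 / pi = A10 / (1 - pi)" using unconf x YT11 YT10 by metis
    with pi show ?thesis by (simp add: field_simps)
  qed
  have u0: "B0 = (B1 + B0) * (1 - pi)"
  proof -
    have "B1 / pi = B0 / (1 - pi)" using unconf x YT01 YT00 by metis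
    with pi show ?thesis by (simp add: field_simps)
  qed
  have mpos: "0 < m" unfolding m_def
    using u1 u0 pi q1b q0b by (smt (verit) mult_pos_pos)
  have mlt: "m < 1"
  proof -
    have "1 - m = pi * (1 - (A11 + A10)) + (1 - pi) * (1 - (B1 + B0))"
      unfolding m_def using u1 u0 by (simp add: algebra_simps)
    moreover have "0 < pi * (1 - (A11 + A10)) + (1 - pi) * (1 - (B1 + B0))"
      using pi q1b q0b by (simp add: add_pos_pos)
    ultimately show ?thesis by linarith
  qed
  have fs: "0 < fXs x" using x by (simp add: supp_def)
  have f1pos: "0 < fXY True x" "0 < fXY False x"
    using common_support x by (auto simp: supp_def)
  have theta: "thetaAR K x = (A11 + A10) - (B1 + B0)" by (simp add: thetaAR_def q1 q0)
  define S where "S = h0 * fXY True x + (1 - h0) * fXY False x"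
  have Spos: "0 < S" unfolding S_def using h0 f1pos by (simp add: add_pos_pos)
  have o1: "obsY h0 fXY True x = h0 * fXY True x / S" by (simp add: obsY_def S_def)
  have o0: "obsY h0 fXY False x = (1 - h0) * fXY False x / S" by (simp add: obsY_def S_def)
  show "thetaAR K x =
           r_AR d h0 fXY x (p0 M fXs K) *
           Gamma_AR d h0 fXY PT x
             (case d of CaseControl \<Rightarrow> p0 M fXs K | CasePopulation \<Rightarrow> 0)"
  proof (cases d)
    case CaseControl
    have D: "\<forall>y t. fXY y x = fXsY M fXs K y x \<and> Pi PT t y x = popT_Y K x t y"
      using design x CaseControl by (simp add: design_holds_def)
    let ?p = "p0 M fXs K"
    have f1: "fXY True x = fXs x * m / ?p" using D Y1 by (simp add: fXsY_def)
    have f0: "fXY False x = fXs x * (1 - m) / (1 - ?p)" using D Y1 by (simp add: fXsY_def)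
    have ppos: "0 < ?p"
    proof (rule ccontr)
      assume "\<not> 0 < ?p"
      hence "fXs x * m / ?p \<le> 0" using fs mpos by (simp add: divide_nonneg_nonpos)
      thus False using f1 f1pos by linarith
    qed
    have plt: "0 < 1 - ?p"
    proof (rule ccontr)
      assume "\<not> 0 < 1 - ?p"
      hence "fXs x * (1 - m) / (1 - ?p) \<le> 0" using fs mlt by (simp add: divide_nonneg_nonpos)
      thus False using f0 f1pos by linarith
    qed
    have n1: "?p * (1 - h0) * obsY h0 fXY True x = (1 - h0) * h0 * fXs x * m / S"
      using ppos Spos by (simp add: o1 f1 field_simps)
    have n0: "h0 * (1 - ?p) * obsY h0 fXY False x = (1 - h0) * h0 * fXs x * (1 - m) / S"
      using plt Spos by (simp add: o0 f0 field_simps)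
    have "r_AR d h0 fXY x ?p = (1 - h0) * h0 * fXs x * m / S /
        ((1 - h0) * h0 * fXs x * m / S + (1 - h0) * h0 * fXs x * (1 - m) / S)"
      using CaseControl by (simp only: r_AR_def n1 n0 design.case)
    also have "\<dots> = m"
      using h0 fs Spos by (simp add: field_simps)
    finally have r: "r_AR d h0 fXY x ?p = m" .
    show ?thesis
      using CaseControl Gamma_core[OF pi mpos mlt u1 u0] D
      by (simp add: Gamma_AR_def r[unfolded CaseControl] TY11 TY10 TY01 TY00 theta Let_def)
  next
    case CasePopulation
    have D: "\<forall>t. fXY False x = fXs x \<and> Pi PT t False x = popT K x t \<and>
          fXY True x = fXsY M fXs K True x \<and> Pi PT t True x = popT_Y K x t True"
      using design x CasePopulation by (simp add: design_holds_def)
    let ?p = "p0 M fXs K"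
    have f1: "fXY True x = fXs x * m / ?p" using D Y1 by (simp add: fXsY_def)
    have f0: "fXY False x = fXs x" using D by simp
    have ppos: "0 < ?p"
    proof (rule ccontr)
      assume "\<not> 0 < ?p"
      hence "fXs x * m / ?p \<le> 0" using fs mpos by (simp add: divide_nonneg_nonpos)
      thus False using f1 f1pos by linarith
    qed
    have r: "r_AR d h0 fXY x ?p = m"
      using CasePopulation h0 fs Spos ppos
      by (simp add: r_AR_def o1 o0 f1 f0 field_simps)
    have r0: "r_AR d h0 fXY x 0 = 0"
      using CasePopulation by (simp add: r_AR_def)
    show ?thesis
      using CasePopulation Gamma_core2[OF pi mpos u1 u0] D
      by (simp add: Gamma_AR_def r[unfolded CasePopulation] r0[unfolded CasePopulation] TY11 TY01 popT1 popT0 theta Let_def)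
  qed
qed

end
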